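(* Let $D,W,N_0,\zeta,P_A>0$ be fixed. For a product of channel gains $x=g h>0$ let $\gamma=\frac{\zeta P_A x}{WN_0}$, $\alpha=\mathbb{L}_0\!\left(\frac{\gamma-1}{e}\right)+1$ with $\mathbb{L}_0$ the principal Lambert W function, and $$\hat\tau_S(x)=\frac{D\ln2}{W\alpha},\qquad \hat\tau_0(x)=\frac{D\ln2}{W\alpha\gamma}\left(2^{\alpha/\ln2}-1\right),$$ i.e. the optimal information transmission and energy harvesting times of a single source with uplink gain $g$ and downlink gain $h$ transmitting $D$ bits directly to the AP when the maximum power constraint is inactive. Then $\hat\tau_S$ and $\hat\tau_0$ are decreasing functions of $x=gh$.
   Context: Single source wireless powered network: the source harvests energy $\zeta P_A h\tau_0$ from the AP during time $\tau_0$, then transmits $D$ bits during time $\tau_S$ to the AP over an AWGN channel with gain $g$, bandwidth $W$, noise spectral density $N_0$; the maximum transmit power is assumed large enough not to constrain the problem. *)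

theory Defs
  imports Complex_Main
begin

text \<open>Principal branch of the Lambert W function, defined for y \<ge> -1/e as the
unique w \<ge> -1 with w * exp w = y.\<close>
definition lambertW0 :: "real \<Rightarrow> real" where
  "lambertW0 y = (THE w. w \<ge> -1 \<and> w * exp w = y)"

definition snr_gamma :: "real \<Rightarrow> real \<Rightarrow> real \<Rightarrow> real \<Rightarrow> real \<Rightarrow> real" where
  "snr_gamma W N0 \<zeta> PA x = \<zeta> * PA * x / (W * N0)"

definition alpha_opt :: "real \<Rightarrow> real \<Rightarrow> real \<Rightarrow> real \<Rightarrow> real \<Rightarrow> real" where
  "alpha_opt W N0 \<zeta> PA x = lambertW0 ((snr_gamma W N0 \<zeta> PA x - 1) / exp 1) + 1"

definition tauS_opt :: "real \<Rightarrow> real \<Rightarrow> real \<Rightarrow> real \<Rightarrow> real \<Rightarrow> real \<Rightarrow> real" where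
  "tauS_opt D W N0 \<zeta> PA x = D * ln 2 / (W * alpha_opt W N0 \<zeta> PA x)"

definition tau0_opt :: "real \<Rightarrow> real \<Rightarrow> real \<Rightarrow> real \<Rightarrow> real \<Rightarrow> real \<Rightarrow> real" where
  "tau0_opt D W N0 \<zeta> PA x =
     D * ln 2 / (W * alpha_opt W N0 \<zeta> PA x * snr_gamma W N0 \<zeta> PA x)
       * (2 powr (alpha_opt W N0 \<zeta> PA x / ln 2) - 1)"

end

theory Submission
  imports Defs
begin

lemma we_mono:
  fixes a b :: real
  assumes "-1 \<le> a" "a < b"
  shows "a * exp a < b * exp b"
proof (rule DERIV_pos_imp_increasing_open[OF assms(2)])
  fix x :: real assume "a < x" "x < b"
  then have "(1 + x) * exp x > 0" using assms by simp
  moreover have "DERIV (\<lambda>x. x * exp x) x :> (exp x + x * exp x)"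
    by (auto intro!: derivative_eq_intros)
  ultimately show "\<exists>y. DERIV (\<lambda>x. x * exp x) x :> y \<and> y > 0"
    by (metis distrib_right mult_1)
next
  show "continuous_on {a..b} (\<lambda>x. x * exp x)" by (intro continuous_intros)
qed

lemma lw:
  fixes y :: real
  assumes "y \<ge> -1 / exp 1"
  shows "lambertW0 y \<ge> -1 \<and> lambertW0 y * exp (lambertW0 y) = y"
proof -
  have "\<exists>w. -1 \<le> w \<and> w \<le> max 0 y \<and> w * exp w = y"
  proof (rule IVT')
    show "(-1) * exp (-1) \<le> y" using assms by (simp add: exp_minus field_simps)
    show "y \<le> max 0 y * exp (max 0 y)"
    proof (cases "y \<ge> 0")
      case True
      then have "y * 1 \<le> y * exp y" by (intro mult_left_mono) auto
      then show ?thesis using True by simp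
    qed simp
    show "-1 \<le> max 0 y" by simp
    show "continuous_on {-1..max 0 y} (\<lambda>x. x * exp x)" by (intro continuous_intros)
  qed
  then obtain w where w: "-1 \<le> w" "w * exp w = y" by blast
  have uniq: "v = w" if v: "-1 \<le> v" "v * exp v = y" for v
  proof (rule ccontr)
    assume "v \<noteq> w"
    then consider "v < w" | "w < v" by linarith
    then show False
    proof cases
      case 1 then show False using we_mono[OF v(1) 1] v(2) w(2) by linarith
    next
      case 2 then show False using we_mono[OF w(1) 2] v(2) w(2) by linarith
    qed
  qed
  have "lambertW0 y = w"
    unfolding lambertW0_def
  proof (rule the_equality)
    show "w \<ge> -1 \<and> w * exp w = y" using w by blast
    show "\<And>v. v \<ge> -1 \<and> v * exp v = y \<Longrightarrow> v = w" using uniq by blast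
  qed
  then show ?thesis using w by simp
qed

lemma F_mono:
  fixes a b :: real
  assumes "0 \<le> a" "a < b"
  shows "(a - 1) * exp a < (b - 1) * exp b"
proof -
  have "(a - 1) * exp (a - 1) < (b - 1) * exp (b - 1)"
    using we_mono[of "a-1" "b-1"] assms by simp
  then have "exp 1 * ((a - 1) * exp (a - 1)) < exp 1 * ((b - 1) * exp (b - 1))"
    by simp
  moreover have "exp 1 * exp (a - 1) = exp a" "exp 1 * exp (b - 1) = exp b"
    by (simp_all add: exp_add[symmetric])
  ultimately show ?thesis by (simp add: algebra_simps)
qed

lemma phi_mono:
  fixes a b :: real
  assumes "0 < a" "a < b"
  shows "a * exp a / (exp a - 1) < b * exp b / (exp b - 1)"
proof (rule DERIV_pos_imp_increasing_open[OF assms(2)])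
  fix x :: real assume x: "a < x" "x < b"
  then have xp: "x > 0" using assms by simp
  have e1: "exp x - 1 > 0" using xp by simp
  have e2: "exp x - 1 - x > 0"
    using exp_minus_greater[of "-x"] xp by simp
  have "DERIV (\<lambda>x. x * exp x / (exp x - 1)) x :>
     (((exp x + x * exp x) * (exp x - 1) - x * exp x * exp x) / (exp x - 1)^2)"
    using e1 by (auto intro!: derivative_eq_intros simp: power2_eq_square)
  moreover have "((exp x + x * exp x) * (exp x - 1) - x * exp x * exp x) = exp x * (exp x - 1 - x)"
    by (simp add: algebra_simps)
  moreover have "exp x * (exp x - 1 - x) / (exp x - 1)^2 > 0" using e1 e2 by simp
  ultimately show "\<exists>y. DERIV (\<lambda>x. x * exp x / (exp x - 1)) x :> y \<and> y > 0" by metis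
next
  have "\<forall>x\<in>{a..b}. exp x - 1 \<noteq> 0" using assms by auto
  then show "continuous_on {a..b} (\<lambda>x. x * exp x / (exp x - 1))"
    by (intro continuous_intros) auto
qed

lemma alpha_props:
  fixes W N0 \<zeta> PA x :: real
  assumes "W > 0" "N0 > 0" "\<zeta> > 0" "PA > 0" "x > 0"
  shows "snr_gamma W N0 \<zeta> PA x > 0 \<and> alpha_opt W N0 \<zeta> PA x > 0 \<and>
    (alpha_opt W N0 \<zeta> PA x - 1) * exp (alpha_opt W N0 \<zeta> PA x) = snr_gamma W N0 \<zeta> PA x - 1"
proof -
  define g where "g = snr_gamma W N0 \<zeta> PA x"
  define w where "w = lambertW0 ((g - 1) / exp 1)"
  have gp: "g > 0" unfolding g_def snr_gamma_def using assms by simp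
  have "(g - 1) / exp 1 \<ge> -1 / exp 1" using divide_right_mono[of "-1" "g-1" "exp 1"] gp by simp
  from lw[OF this] have w: "w \<ge> -1" "w * exp w = (g - 1) / exp 1" unfolding w_def by auto
  have al: "alpha_opt W N0 \<zeta> PA x = w + 1" unfolding alpha_opt_def w_def g_def by simp
  have ee: "exp (w + 1) = exp w * exp 1" by (simp add: exp_add)
  have eq: "w * exp (w + 1) = g - 1" using w(2) ee by (simp add: field_simps)
  have "w + 1 \<noteq> 0" proof
    assume "w + 1 = 0" then have "w = -1" by simp
    then show False using eq gp by simp
  qed
  then have "w + 1 > 0" using w(1) by simp
  then show ?thesis using gp eq al g_def by simp
qed

theorem lemma6:
  fixes D W N0 \<zeta> PA :: real
  assumes "D > 0" "W > 0" "N0 > 0" "\<zeta> > 0" "PA > 0"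
  shows "\<forall>x y. 0 < x \<longrightarrow> x < y \<longrightarrow>
            tauS_opt D W N0 \<zeta> PA y < tauS_opt D W N0 \<zeta> PA x \<and>
            tau0_opt D W N0 \<zeta> PA y < tau0_opt D W N0 \<zeta> PA x"
proof (intro allI impI)
  fix x y :: real assume xy: "0 < x" "x < y"
  define a where "a = alpha_opt W N0 \<zeta> PA x"
  define b where "b = alpha_opt W N0 \<zeta> PA y"
  define gx where "gx = snr_gamma W N0 \<zeta> PA x"
  define gy where "gy = snr_gamma W N0 \<zeta> PA y"
  have A: "gx > 0" "a > 0" "(a - 1) * exp a = gx - 1"
    using alpha_props[OF assms(2-5) xy(1)] unfolding a_def gx_def by auto
  have B: "gy > 0" "b > 0" "(b - 1) * exp b = gy - 1"
    using alpha_props[OF assms(2-5), of y] xy unfolding b_def gy_def by auto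
  have "gx < gy" unfolding gx_def gy_def snr_gamma_def using assms xy
    by (simp add: divide_strict_right_mono)
  have ab: "a < b"
  proof (rule ccontr)
    assume "\<not> a < b"
    then have "b \<le> a" by simp
    then have "(b - 1) * exp b \<le> (a - 1) * exp a"
      using F_mono[of b a] B(2) by (cases "b = a") auto
    then show False using A B \<open>gx < gy\<close> by simp
  qed
  have K: "D * ln 2 > 0" using assms by simp
  have "tauS_opt D W N0 \<zeta> PA y < tauS_opt D W N0 \<zeta> PA x"
    unfolding tauS_opt_def a_def[symmetric] b_def[symmetric]
    using K ab A B assms by (intro divide_strict_left_mono) auto
  moreover
  have pw: "2 powr (t / ln 2) = exp t" for t :: real
    by (simp add: powr_def)
  have Hx: "a * gx / (exp a - 1) = a * (a * exp a / (exp a - 1) - 1)"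
  proof -
    have "exp a - 1 > 0" using A by simp
    moreover have g: "gx = a * exp a - (exp a - 1)" using A(3) by (simp add: algebra_simps)
    ultimately show ?thesis by (simp add: g field_simps)
  qed
  have Hy: "b * gy / (exp b - 1) = b * (b * exp b / (exp b - 1) - 1)"
  proof -
    have "exp b - 1 > 0" using B by simp
    moreover have g: "gy = b * exp b - (exp b - 1)" using B(3) by (simp add: algebra_simps)
    ultimately show ?thesis by (simp add: g field_simps)
  qed
  have px: "a * exp a / (exp a - 1) - 1 > 0"
  proof -
    have e: "exp a - 1 > 0" using A by simp
    have "gx = a * exp a - (exp a - 1)" using A(3) by (simp add: algebra_simps)
    then have "a * exp a / (exp a - 1) - 1 = gx / (exp a - 1)" using e by (simp add: field_simps)
    then show ?thesis using e A(1) by simp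
  qed
  have H: "a * gx / (exp a - 1) < b * gy / (exp b - 1)"
    unfolding Hx Hy using phi_mono[OF A(2) ab] px A(2) ab
    by (intro mult_strict_mono) auto
  have hxp: "a * gx / (exp a - 1) > 0" using A by simp
  have t0: "tau0_opt D W N0 \<zeta> PA z = D * ln 2 / W / (alpha_opt W N0 \<zeta> PA z * snr_gamma W N0 \<zeta> PA z / (exp (alpha_opt W N0 \<zeta> PA z) - 1))" for z
    unfolding tau0_opt_def pw by (simp add: field_simps)
  have "tau0_opt D W N0 \<zeta> PA y < tau0_opt D W N0 \<zeta> PA x"
    unfolding t0 a_def[symmetric] b_def[symmetric] gx_def[symmetric] gy_def[symmetric]
  proof (rule divide_strict_left_mono[OF H])
    show "0 < D * ln 2 / W" using K assms by simp
    show "0 < b * gy / (exp b - 1) * (a * gx / (exp a - 1))"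
      using H hxp by (intro mult_pos_pos) auto
  qed
  ultimately show "tauS_opt D W N0 \<zeta> PA y < tauS_opt D W N0 \<zeta> PA x \<and>
            tau0_opt D W N0 \<zeta> PA y < tau0_opt D W N0 \<zeta> PA x" by simp
qed

end
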